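(* If $a\ne 1$ and either $b\ne 0, c=0$ or $b=0, c\ne 0$, then $\check{f}$ has at most one root. Furthermore, exactly one of the following statements is true. 1. $\check{f}$ has exactly one root $x_0$ at which it changes sign. The derivative $\check{f}'$ is nonzero at $x_0$, and either $a>1,b>0,c=0$ or $a>1,b=0,c<0$ or $a<1,b<0,c=0$ or $a<1,b=0,c>0$. 2. $\check{f}$ has no root, and either $a<1,b>0,c=0$ or $a<1,b=0,c<0$ or $a>1,b<0,c=0$ or $a>1,b=0,c>0$.
   Context: A function $f:\mathbb{R}^+\to\mathbb{R}^+$ is called strongly hyperbolic if: (1) $\lim_{x\to 0+} f(x)=+\infty$ and $\lim_{x\to+\infty} f(x)=0$; (2) $f$ is strictly convex; (3) for each $b\in\mathbb{R}$, $\lim_{x\to+\infty} f(x+b)/f(x)=1$; (4) $f$ is differentiable; (5) $\ln|f'(x)|$ is strictly convex. Let $f$ be a strongly hyperbolic function, let $a>0$, $b,c\in\mathbb{R}$, and define $\check{f}:(\max\{-b,0\},\infty)\to\mathbb{R}$ by $\check{f}(x)=af(x+b)+c-f(x)$. *)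

theory Defs
  imports "HOL-Analysis.Analysis"
begin

definition strictly_convex_on :: "real set \<Rightarrow> (real \<Rightarrow> real) \<Rightarrow> bool" where
  "strictly_convex_on S g \<longleftrightarrow> convex S \<and>
     (\<forall>x\<in>S. \<forall>y\<in>S. \<forall>t::real. x \<noteq> y \<and> 0 < t \<and> t < 1 \<longrightarrow>
        g ((1 - t) * x + t * y) < (1 - t) * g x + t * g y)"

text \<open>Strongly hyperbolic functions \<open>f : \<real>\<^sup>+ \<rightarrow> \<real>\<^sup>+\<close>; only the values on \<open>(0,\<infinity>)\<close> matter.\<close>
definition strongly_hyperbolic :: "(real \<Rightarrow> real) \<Rightarrow> bool" where
  "strongly_hyperbolic f \<longleftrightarrow>
     (\<forall>x>0. f x > 0) \<and>
     filterlim f at_top (at_right 0) \<and>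
     (f \<longlongrightarrow> 0) at_top \<and>
     strictly_convex_on {0<..} f \<and>
     (\<forall>b. ((\<lambda>x. f (x + b) / f x) \<longlongrightarrow> 1) at_top) \<and>
     (\<forall>x>0. f differentiable (at x)) \<and>
     strictly_convex_on {0<..} (\<lambda>x. ln \<bar>deriv f x\<bar>)"

definition fcheck :: "(real \<Rightarrow> real) \<Rightarrow> real \<Rightarrow> real \<Rightarrow> real \<Rightarrow> real \<Rightarrow> real" where
  "fcheck f a b c x = a * f (x + b) + c - f x"

definition fcheck_dom :: "real \<Rightarrow> real set" where
  "fcheck_dom b = {max (- b) 0 <..}"

definition changes_sign_at :: "(real \<Rightarrow> real) \<Rightarrow> real \<Rightarrow> bool" where
  "changes_sign_at g x0 \<longleftrightarrow> (\<exists>e>0.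
     ((\<forall>x. x0 - e < x \<and> x < x0 \<longrightarrow> g x < 0) \<and> (\<forall>x. x0 < x \<and> x < x0 + e \<longrightarrow> g x > 0)) \<or>
     ((\<forall>x. x0 - e < x \<and> x < x0 \<longrightarrow> g x > 0) \<and> (\<forall>x. x0 < x \<and> x < x0 + e \<longrightarrow> g x < 0)))"

end

theory Submission imports Defs begin

lemma sh_pos: "strongly_hyperbolic f \<Longrightarrow> x > 0 \<Longrightarrow> f x > 0"
  unfolding strongly_hyperbolic_def by auto

lemma sh_der: "strongly_hyperbolic f \<Longrightarrow> x > 0 \<Longrightarrow> (f has_real_derivative deriv f x) (at x)"
  unfolding strongly_hyperbolic_def using DERIV_deriv_iff_real_differentiable by blast

lemma sh_cont: "strongly_hyperbolic f \<Longrightarrow> x > 0 \<Longrightarrow> isCont f x"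
  using sh_der DERIV_isCont by blast

lemma sh_lim0: "strongly_hyperbolic f \<Longrightarrow> (f \<longlongrightarrow> 0) at_top"
  unfolding strongly_hyperbolic_def by auto

lemma sh_convex: "strongly_hyperbolic f \<Longrightarrow> convex_on {0<..} f"
proof -
  assume h: "strongly_hyperbolic f"
  then have sc: "strictly_convex_on {0<..} f" unfolding strongly_hyperbolic_def by auto
  show ?thesis
  proof (rule convex_onI)
    fix t x y :: real assume "t > 0" "t < 1" "x \<in> {0<..}" "y \<in> {0<..}"
    then show "f ((1 - t) *\<^sub>R x + t *\<^sub>R y) \<le> (1 - t) * f x + t * f y"
    proof (cases "x = y")
      case True then show ?thesis by (simp add: algebra_simps)
    next
      case False
      have "f ((1 - t) * x + t * y) < (1 - t) * f x + t * f y"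
        using sc False \<open>t > 0\<close> \<open>t < 1\<close> \<open>x \<in> {0<..}\<close> \<open>y \<in> {0<..}\<close>
        unfolding strictly_convex_on_def by blast
      then show ?thesis by simp
    qed
  qed simp
qed

lemma sh_deriv_neg: assumes h: "strongly_hyperbolic f" and x: "x > 0" shows "deriv f x < 0"
proof (rule ccontr)
  assume "\<not> deriv f x < 0"
  then have d: "deriv f x \<ge> 0" by simp
  have tan: "f y - f x \<ge> deriv f x * (y - x)" if "y > 0" for y
    apply (rule convex_on_imp_above_tangent[OF sh_convex[OF h]])
    using x that sh_der[OF h x] by (auto simp: interior_open intro: has_field_derivative_at_within)
  have "eventually (\<lambda>y. f y < f x) at_top"
    using order_tendstoD(2)[OF sh_lim0[OF h] sh_pos[OF h x]] .
  moreover have "eventually (\<lambda>y. y \<ge> x) at_top" by (rule eventually_ge_at_top)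
  ultimately obtain y where "f y < f x" "y \<ge> x"
    using eventually_happens'[OF trivial_limit_at_top_linorder] eventually_conj by (metis (mono_tags, lifting))
  moreover have "f y - f x \<ge> deriv f x * (y - x)" using tan \<open>y \<ge> x\<close> x by simp
  moreover have "deriv f x * (y - x) \<ge> 0" using d \<open>y \<ge> x\<close> by simp
  ultimately show False by linarith
qed

lemma sh_decr: assumes h: "strongly_hyperbolic f" and "0 < x" "x < y" shows "f y < f x"
  using assms by (intro DERIV_neg_imp_decreasing[of x y f]) (auto intro!: exI[of _ "deriv f _"] sh_der sh_deriv_neg)

lemma slope3:
  assumes sc: "strictly_convex_on S g" and S: "p \<in> S" "q \<in> S" "r \<in> S" and pq: "p < q" "q < r"
  shows "(g q - g p) / (q - p) < (g r - g p) / (r - p)" "(g r - g p) / (r - p) < (g r - g q) / (r - q)"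
proof -
  define t where "t = (q - p) / (r - p)"
  have t: "0 < t" "t < 1" using pq unfolding t_def by (auto simp: field_simps)
  have tt: "t * (r - p) = q - p" using pq unfolding t_def by simp
  have qt: "q = (1 - t) * p + t * r" using tt by (simp add: algebra_simps)
  have "g ((1 - t) * p + t * r) < (1 - t) * g p + t * g r"
    using sc S t pq unfolding strictly_convex_on_def by (metis less_irrefl order.strict_trans)
  then have gq: "g q < (1 - t) * g p + t * g r" using qt by simp
  have e1: "(1 - t) * (r - p) = r - q" using tt by (simp add: algebra_simps)
  have "g q * (r - p) < ((1 - t) * g p + t * g r) * (r - p)"
    using gq pq by (intro mult_strict_right_mono) auto
  also have "\<dots> = g p * ((1 - t) * (r - p)) + g r * (t * (r - p))" by (simp add: algebra_simps)
  also have "\<dots> = g p * (r - q) + g r * (q - p)" by (simp only: e1 tt)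
  finally have m: "g q * (r - p) < g p * (r - q) + g r * (q - p)" .
  show "(g q - g p) / (q - p) < (g r - g p) / (r - p)"
    using m pq by (simp add: field_simps)
  show "(g r - g p) / (r - p) < (g r - g q) / (r - q)"
    using m pq by (simp add: field_simps)
qed

lemma shift_ineq:
  assumes sc: "strictly_convex_on {0<..} g" and "0 < p" "p < q" "0 < s"
  shows "g q - g p < g (q + s) - g (p + s)"
proof -
  have A: "(g q - g p) / (q - p) < (g (q+s) - g p) / (q + s - p)"
    using slope3(1)[OF sc, of p q "q+s"] assms by auto
  have B: "(g (q+s) - g p) / (q + s - p) < (g (q+s) - g (p+s)) / ((q + s) - (p + s))"
    using slope3(2)[OF sc, of p "p+s" "q+s"] assms by auto
  have "(g q - g p) / (q - p) < (g (q+s) - g (p+s)) / (q - p)" using A B by simp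
  then show ?thesis using assms by (simp add: divide_less_cancel)
qed

lemma keyK:
  assumes h: "strongly_hyperbolic f" and xy: "0 < x" "x < y"
  shows "deriv f y * f x > deriv f x * f y"
proof -
  define H where "H z = - deriv f z" for z
  have Hpos: "H z > 0" if "z > 0" for z using sh_deriv_neg[OF h that] unfolding H_def by simp
  have sc: "strictly_convex_on {0<..} (\<lambda>z. ln \<bar>deriv f z\<bar>)"
    using h unfolding strongly_hyperbolic_def by auto
  have lnH: "ln \<bar>deriv f z\<bar> = ln (H z)" if "z > 0" for z
    using sh_deriv_neg[OF h that] unfolding H_def by simp
  have Hs: "H y * H (x + s) < H (y + s) * H x" if "s > 0" for s
  proof -
    have "ln (H y) - ln (H x) < ln (H (y + s)) - ln (H (x + s))"
      using shift_ineq[OF sc, of x y s] xy that lnH[of x] lnH[of y] lnH[of "x+s"] lnH[of "y+s"] by simp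
    moreover have "H y > 0" "H x > 0" "H (x+s) > 0" "H (y+s) > 0" using Hpos xy that by auto
    ultimately have "ln (H y * H (x + s)) < ln (H (y + s) * H x)"
      by (simp add: ln_mult)
    then show ?thesis using Hpos xy that by simp
  qed
  define psi where "psi s = H x * f (y + s) - H y * f (x + s)" for s
  have dpsi: "(psi has_real_derivative (H y * H (x + s) - H x * H (y + s))) (at s)" if "s \<ge> 0" for s
  proof -
    have "(psi has_real_derivative (H x * deriv f (y + s) - H y * deriv f (x + s))) (at s)"
      unfolding psi_def using xy that
      by (auto intro!: derivative_eq_intros DERIV_chain2[OF sh_der[OF h]])
    then show ?thesis unfolding H_def by (simp add: algebra_simps)
  qed
  have lim1: "((\<lambda>s. f (z + s)) \<longlongrightarrow> 0) at_top" for z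
    by (rule filterlim_compose[OF sh_lim0[OF h]])
       (rule filterlim_tendsto_add_at_top[OF tendsto_const filterlim_ident])
  have limpsi: "(psi \<longlongrightarrow> 0) at_top"
    unfolding psi_def using tendsto_diff[OF tendsto_mult[OF tendsto_const lim1] tendsto_mult[OF tendsto_const lim1]]
    by simp
  have p1: "0 < psi 1"
  proof (rule DERIV_neg_imp_decreasing_at_top[OF _ limpsi])
    fix s :: real assume "s \<ge> 1"
    then show "\<exists>d. (psi has_real_derivative d) (at s) \<and> d < 0"
      using dpsi[of s] Hs[of s] by (intro exI[of _ "H y * H (x + s) - H x * H (y + s)"]) (auto simp: mult.commute)
  qed
  have p0: "psi 1 \<le> psi 0"
  proof (rule DERIV_nonpos_imp_nonincreasing[of 0 1 psi])
    fix s :: real assume "0 \<le> s" "s \<le> 1"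
    then show "\<exists>d. (psi has_real_derivative d) (at s) \<and> d \<le> 0"
      using dpsi[of s] Hs[of s] by (intro exI[of _ "H y * H (x + s) - H x * H (y + s)"])
        (cases "s = 0"; auto simp: mult.commute)
  qed simp
  have "0 < psi 0" using p0 p1 by simp
  then show ?thesis unfolding psi_def H_def by (simp add: algebra_simps)
qed

lemma sh_big_near0: assumes h: "strongly_hyperbolic f" shows "\<exists>x>0. f x > M"
proof -
  have "filterlim f at_top (at_right 0)" using h unfolding strongly_hyperbolic_def by auto
  then have "eventually (\<lambda>x. M + 1 \<le> f x) (at_right (0::real))" by (simp add: filterlim_at_top)
  moreover have "eventually (\<lambda>x. 0 < x) (at_right (0::real))" by (rule eventually_at_right_less)
  ultimately have "eventually (\<lambda>x. 0 < x \<and> M + 1 \<le> f x) (at_right (0::real))" by (rule eventually_conj[rotated])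
  then obtain x where "0 < x \<and> M + 1 \<le> f x" using eventually_happens'[OF trivial_limit_at_right_real] by blast
  then show ?thesis by (intro exI[of _ x]) auto
qed

lemma ev_top_ex: assumes "eventually P at_top" shows "\<exists>x\<ge>(x1::real). P x"
proof -
  obtain N where "\<forall>n\<ge>N. P n" using assms by (auto simp: eventually_at_top_linorder)
  then show ?thesis by (intro exI[of _ "max N x1"]) auto
qed

lemma sign_incr:
  fixes F G :: "real \<Rightarrow> real"
  assumes mono: "\<And>x y. m < x \<Longrightarrow> x < y \<Longrightarrow> G x < G y"
    and s1: "\<And>x. m < x \<Longrightarrow> F x < 0 \<longleftrightarrow> G x < 0"
    and s2: "\<And>x. m < x \<Longrightarrow> F x > 0 \<longleftrightarrow> G x > 0"
  shows "\<forall>x y. m < x \<and> m < y \<and> F x = 0 \<and> F y = 0 \<longrightarrow> x = y"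
    and "m < x0 \<Longrightarrow> F x0 = 0 \<Longrightarrow> changes_sign_at F x0"
proof -
  have z: "F x = 0 \<longleftrightarrow> G x = 0" if "m < x" for x
    using s1[OF that] s2[OF that] by (cases "F x" "0::real" rule: linorder_cases) auto
  show "\<forall>x y. m < x \<and> m < y \<and> F x = 0 \<and> F y = 0 \<longrightarrow> x = y"
    using z mono by (metis linorder_neqE_linordered_idom less_irrefl)
  assume x0: "m < x0" "F x0 = 0"
  then have g0: "G x0 = 0" using z by blast
  show "changes_sign_at F x0" unfolding changes_sign_at_def
  proof (intro exI[of _ "x0 - m"] conjI disjI1 allI impI)
    show "0 < x0 - m" using x0 by simp
    fix x assume "x0 - (x0 - m) < x \<and> x < x0"
    then show "F x < 0" using s1[of x] mono[of x x0] g0 by auto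
  next
    fix x assume "x0 < x \<and> x < x0 + (x0 - m)"
    then show "F x > 0" using s2[of x] mono[of x0 x] g0 x0 by auto
  qed
qed

lemma sign_decr:
  fixes F G :: "real \<Rightarrow> real"
  assumes mono: "\<And>x y. m < x \<Longrightarrow> x < y \<Longrightarrow> G x > G y"
    and s1: "\<And>x. m < x \<Longrightarrow> F x < 0 \<longleftrightarrow> G x < 0"
    and s2: "\<And>x. m < x \<Longrightarrow> F x > 0 \<longleftrightarrow> G x > 0"
  shows "\<forall>x y. m < x \<and> m < y \<and> F x = 0 \<and> F y = 0 \<longrightarrow> x = y"
    and "m < x0 \<Longrightarrow> F x0 = 0 \<Longrightarrow> changes_sign_at F x0"
proof -
  have z: "F x = 0 \<longleftrightarrow> G x = 0" if "m < x" for x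
    using s1[OF that] s2[OF that] by (cases "F x" "0::real" rule: linorder_cases) auto
  show "\<forall>x y. m < x \<and> m < y \<and> F x = 0 \<and> F y = 0 \<longrightarrow> x = y"
    using z mono by (metis linorder_neqE_linordered_idom less_irrefl)
  assume x0: "m < x0" "F x0 = 0"
  then have g0: "G x0 = 0" using z by blast
  show "changes_sign_at F x0" unfolding changes_sign_at_def
  proof (intro exI[of _ "x0 - m"] conjI disjI2 allI impI)
    show "0 < x0 - m" using x0 by simp
    fix x assume "x0 - (x0 - m) < x \<and> x < x0"
    then show "F x > 0" using s2[of x] mono[of x x0] g0 by auto
  next
    fix x assume "x0 < x \<and> x < x0 + (x0 - m)"
    then show "F x < 0" using s1[of x] mono[of x0 x] g0 x0 by auto
  qed
qed

lemma case_b0: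
  fixes f :: "real \<Rightarrow> real" and a c :: real
  assumes h: "strongly_hyperbolic f" and ha: "a > 0" and ha1: "a \<noteq> 1"
  defines "F \<equiv> fcheck f a 0 c"
  shows "\<forall>x\<in>fcheck_dom 0. \<forall>y\<in>fcheck_dom 0. F x = 0 \<and> F y = 0 \<longrightarrow> x = y"
    and "(a > 1 \<and> c < 0) \<or> (a < 1 \<and> c > 0) \<Longrightarrow>
         \<exists>x0\<in>fcheck_dom 0. F x0 = 0 \<and> changes_sign_at F x0 \<and> deriv F x0 \<noteq> 0"
    and "\<not> ((a > 1 \<and> c < 0) \<or> (a < 1 \<and> c > 0)) \<Longrightarrow> \<forall>x\<in>fcheck_dom 0. F x \<noteq> 0"
proof -
  have dom: "fcheck_dom 0 = {0<..}" unfolding fcheck_dom_def by simp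
  define v where "v = c / (1 - a)"
  have cv: "c = (1 - a) * v" using ha1 unfolding v_def by simp
  have Fx: "F x = (a - 1) * (f x - v)" for x unfolding F_def fcheck_def cv by (simp add: algebra_simps)
  have UC: "(\<forall>x y. 0 < x \<and> 0 < y \<and> F x = 0 \<and> F y = 0 \<longrightarrow> x = y) \<and>
            (\<forall>x0. 0 < x0 \<longrightarrow> F x0 = 0 \<longrightarrow> changes_sign_at F x0)"
  proof (cases "a > 1")
    case True
    have m: "\<And>x y. 0 < x \<Longrightarrow> x < y \<Longrightarrow> f x - v > f y - v" using sh_decr[OF h] by auto
    have s1: "\<And>x. 0 < x \<Longrightarrow> F x < 0 \<longleftrightarrow> f x - v < 0" unfolding Fx using True by (simp add: mult_less_0_iff)
    have s2: "\<And>x. 0 < x \<Longrightarrow> F x > 0 \<longleftrightarrow> f x - v > 0" unfolding Fx using True by (simp add: zero_less_mult_iff)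
    note r = sign_decr[of 0 "\<lambda>x. f x - v" F, OF m s1 s2]
    show ?thesis using r(1) r(2) by blast
  next
    case False
    then have a1: "a < 1" using ha1 by simp
    have Fx': "F x = (1 - a) * (v - f x)" for x unfolding Fx by (simp add: algebra_simps)
    have m: "\<And>x y. 0 < x \<Longrightarrow> x < y \<Longrightarrow> v - f x < v - f y" using sh_decr[OF h] by auto
    have s1: "\<And>x. 0 < x \<Longrightarrow> F x < 0 \<longleftrightarrow> v - f x < 0" unfolding Fx' using a1 by (simp add: mult_less_0_iff)
    have s2: "\<And>x. 0 < x \<Longrightarrow> F x > 0 \<longleftrightarrow> v - f x > 0" unfolding Fx' using a1 by (simp add: zero_less_mult_iff)
    note r = sign_incr[of 0 "\<lambda>x. v - f x" F, OF m s1 s2]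
    show ?thesis using r(1) r(2) by blast
  qed
  show "\<forall>x\<in>fcheck_dom 0. \<forall>y\<in>fcheck_dom 0. F x = 0 \<and> F y = 0 \<longrightarrow> x = y"
    using UC unfolding dom greaterThan_iff by blast
  show "\<not> ((a > 1 \<and> c < 0) \<or> (a < 1 \<and> c > 0)) \<Longrightarrow> \<forall>x\<in>fcheck_dom 0. F x \<noteq> 0"
  proof -
    assume nc: "\<not> ((a > 1 \<and> c < 0) \<or> (a < 1 \<and> c > 0))"
    have "v \<le> 0" unfolding v_def divide_le_0_iff using nc ha1 by linarith
    show ?thesis unfolding dom
    proof
      fix x :: real assume "x \<in> {0<..}"
      then have "f x > 0" using sh_pos[OF h] by simp
      then have "f x - v \<noteq> 0" using \<open>v \<le> 0\<close> by simp
      then show "F x \<noteq> 0" unfolding Fx using ha1 by simp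
    qed
  qed
  assume cond: "(a > 1 \<and> c < 0) \<or> (a < 1 \<and> c > 0)"
  have vpos: "v > 0" unfolding v_def zero_less_divide_iff using cond by linarith
  obtain x1 where x1: "x1 > 0" "f x1 > v" using sh_big_near0[OF h] by blast
  have "eventually (\<lambda>x. f x < v) at_top" using order_tendstoD(2)[OF sh_lim0[OF h] vpos] .
  then obtain x2 where x2: "x2 \<ge> x1" "f x2 < v" using ev_top_ex by blast
  have "\<exists>x. x1 \<le> x \<and> x \<le> x2 \<and> f x = v"
  proof (rule IVT2)
    show "\<forall>x. x1 \<le> x \<and> x \<le> x2 \<longrightarrow> isCont f x" using x1 sh_cont[OF h] by auto
  qed (use x1 x2 in auto)
  then obtain x0 where x0: "x1 \<le> x0" "f x0 = v" by blast
  have x0pos: "x0 > 0" using x0 x1 by simp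
  have F0: "F x0 = 0" unfolding Fx x0 by simp
  have "(F has_real_derivative (a - 1) * deriv f x0) (at x0)"
    unfolding F_def fcheck_def[abs_def] using sh_der[OF h x0pos]
    by (auto intro!: derivative_eq_intros simp: algebra_simps)
  then have "deriv F x0 = (a - 1) * deriv f x0" by (rule DERIV_imp_deriv)
  then have "deriv F x0 \<noteq> 0" using sh_deriv_neg[OF h x0pos] ha1 by simp
  then show "\<exists>x0\<in>fcheck_dom 0. F x0 = 0 \<and> changes_sign_at F x0 \<and> deriv F x0 \<noteq> 0"
    using UC F0 x0pos unfolding dom greaterThan_iff by blast
qed

lemma pos_mult_sign: fixes p q :: real assumes "p > 0"
  shows "p * q < 0 \<longleftrightarrow> q < 0" "p * q > 0 \<longleftrightarrow> q > 0"
  using assms by (auto simp: mult_less_0_iff zero_less_mult_iff)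

lemma case_c0:
  fixes f :: "real \<Rightarrow> real" and a b :: real
  assumes h: "strongly_hyperbolic f" and ha: "a > 0" and ha1: "a \<noteq> 1" and hb: "b \<noteq> 0"
  defines "F \<equiv> fcheck f a b 0"
  shows "\<forall>x\<in>fcheck_dom b. \<forall>y\<in>fcheck_dom b. F x = 0 \<and> F y = 0 \<longrightarrow> x = y"
    and "(a > 1 \<and> b > 0) \<or> (a < 1 \<and> b < 0) \<Longrightarrow>
         \<exists>x0\<in>fcheck_dom b. F x0 = 0 \<and> changes_sign_at F x0 \<and> deriv F x0 \<noteq> 0"
    and "\<not> ((a > 1 \<and> b > 0) \<or> (a < 1 \<and> b < 0)) \<Longrightarrow> \<forall>x\<in>fcheck_dom b. F x \<noteq> 0"
proof -
  define m where "m = max (- b) 0"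
  have dom: "fcheck_dom b = {m<..}" unfolding fcheck_dom_def m_def by simp
  have mx: "0 < x" "0 < x + b" if "m < x" for x using that unfolding m_def by auto
  have F0: "F x = a * f (x + b) - f x" for x unfolding F_def fcheck_def by simp
  define r where "r x = f (x + b) / f x" for x
  define G where "G x = r x - 1 / a" for x
  have Fx: "F x = (a * f x) * G x" if "m < x" for x
    using mx[OF that] sh_pos[OF h, of x] ha unfolding F0 G_def r_def by (simp add: field_simps)
  have s1: "F x < 0 \<longleftrightarrow> G x < 0" if "m < x" for x
  proof -
    have "a * f x > 0" using mx[OF that] sh_pos[OF h, of x] ha by simp
    then show ?thesis unfolding Fx[OF that] by (rule pos_mult_sign)
  qed
  have s2: "F x > 0 \<longleftrightarrow> G x > 0" if "m < x" for x
  proof -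
    have "a * f x > 0" using mx[OF that] sh_pos[OF h, of x] ha by simp
    then show ?thesis unfolding Fx[OF that] by (rule pos_mult_sign)
  qed
  have dG: "(G has_real_derivative (deriv f (x + b) * f x - f (x + b) * deriv f x) / (f x * f x)) (at x)"
    if "m < x" for x
  proof -
    have d1: "((\<lambda>x. f (x + b)) has_real_derivative deriv f (x + b)) (at x)"
      using DERIV_shift[THEN iffD1, OF sh_der[OF h mx(2)[OF that]]] .
    have "(r has_real_derivative (deriv f (x + b) * f x - f (x + b) * deriv f x) / (f x * f x)) (at x)"
      unfolding r_def[abs_def] using DERIV_divide[OF d1 sh_der[OF h mx(1)[OF that]]] sh_pos[OF h mx(1)[OF that]]
      by simp
    then show ?thesis unfolding G_def[abs_def] by (auto intro!: derivative_eq_intros)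
  qed
  have dF: "(F has_real_derivative a * deriv f (x + b) - deriv f x) (at x)" if "m < x" for x
  proof -
    have d1: "((\<lambda>x. f (x + b)) has_real_derivative deriv f (x + b)) (at x)"
      using DERIV_shift[THEN iffD1, OF sh_der[OF h mx(2)[OF that]]] .
    have "((\<lambda>x. a * f (x + b) - f x) has_real_derivative a * deriv f (x + b) - deriv f x) (at x)"
      by (intro DERIV_diff DERIV_cmult d1 sh_der[OF h mx(1)[OF that]])
    moreover have "F = (\<lambda>x. a * f (x + b) - f x)" using F0 by (simp add: fun_eq_iff)
    ultimately show ?thesis by simp
  qed
  have UC: "(\<forall>x y. m < x \<and> m < y \<and> F x = 0 \<and> F y = 0 \<longrightarrow> x = y) \<and>
            (\<forall>x0. m < x0 \<longrightarrow> F x0 = 0 \<longrightarrow> changes_sign_at F x0)"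
  proof (cases "b > 0")
    case True
    have mono: "G x < G y" if "m < x" "x < y" for x y
    proof (rule DERIV_pos_imp_increasing[OF that(2)])
      fix z assume z: "x \<le> z" "z \<le> y"
      then have mz: "m < z" using that by simp
      have "deriv f (z + b) * f z > deriv f z * f (z + b)" using keyK[OF h mx(1)[OF mz]] True by simp
      moreover have "f z * f z > 0" using sh_pos[OF h mx(1)[OF mz]] by simp
      ultimately show "\<exists>d. (G has_real_derivative d) (at z) \<and> d > 0"
        using dG[OF mz] by (intro exI[of _ "(deriv f (z + b) * f z - f (z + b) * deriv f z) / (f z * f z)"])
          (simp add: mult.commute)
    qed
    note rr = sign_incr[of m G F, OF mono s1 s2]
    show ?thesis using rr(1) rr(2) by blast
  next
    case False
    then have bn: "b < 0" using hb by simp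
    have mono: "G x > G y" if "m < x" "x < y" for x y
    proof (rule DERIV_neg_imp_decreasing[OF that(2)])
      fix z assume z: "x \<le> z" "z \<le> y"
      then have mz: "m < z" using that by simp
      have "deriv f z * f (z + b) > deriv f (z + b) * f z" using keyK[OF h mx(2)[OF mz]] bn by simp
      moreover have "f z * f z > 0" using sh_pos[OF h mx(1)[OF mz]] by simp
      ultimately show "\<exists>d. (G has_real_derivative d) (at z) \<and> d < 0"
        using dG[OF mz] by (intro exI[of _ "(deriv f (z + b) * f z - f (z + b) * deriv f z) / (f z * f z)"])
          (simp add: mult.commute divide_neg_pos)
    qed
    note rr = sign_decr[of m G F, OF mono s1 s2]
    show ?thesis using rr(1) rr(2) by blast
  qed
  show "\<forall>x\<in>fcheck_dom b. \<forall>y\<in>fcheck_dom b. F x = 0 \<and> F y = 0 \<longrightarrow> x = y"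
    using UC unfolding dom greaterThan_iff by blast
  show "\<not> ((a > 1 \<and> b > 0) \<or> (a < 1 \<and> b < 0)) \<Longrightarrow> \<forall>x\<in>fcheck_dom b. F x \<noteq> 0"
  proof -
    assume nc: "\<not> ((a > 1 \<and> b > 0) \<or> (a < 1 \<and> b < 0))"
    show ?thesis unfolding dom greaterThan_iff
    proof (intro ballI)
      fix x assume "x \<in> {m<..}"
      then have x: "m < x" by simp
      have p1: "f x > 0" "f (x + b) > 0" using sh_pos[OF h] mx[OF x] by auto
      show "F x \<noteq> 0"
      proof (cases "b > 0")
        case True
        then have "a < 1" using nc ha1 by auto
        moreover have "f (x + b) < f x" using sh_decr[OF h mx(1)[OF x]] True by simp
        ultimately have "a * f (x + b) < f x" using p1
          by (smt (verit) mult_less_cancel_right2)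
        then show ?thesis unfolding F0 by simp
      next
        case False
        then have "a > 1" "b < 0" using nc ha1 hb by auto
        moreover have "f (x + b) > f x" using sh_decr[OF h mx(2)[OF x], of x] \<open>b < 0\<close> by simp
        ultimately have "a * f (x + b) > f x" using p1
          by (smt (verit) mult_less_cancel_right2)
        then show ?thesis unfolding F0 by simp
      qed
    qed
  qed
  assume cond: "(a > 1 \<and> b > 0) \<or> (a < 1 \<and> b < 0)"
  have cF: "isCont F z" if "m < z" for z using dF[OF that] by (rule DERIV_isCont)
  have lim: "(r \<longlongrightarrow> 1) at_top" unfolding r_def[abs_def] using h unfolding strongly_hyperbolic_def by blast
  have "\<exists>x0. m < x0 \<and> F x0 = 0"
  proof (cases "b > 0")
    case True
    then have a1: "a > 1" and m0: "m = 0" using cond unfolding m_def by auto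
    obtain x1 where x1: "x1 > 0" "f x1 > a * f b" using sh_big_near0[OF h] by blast
    have "f (x1 + b) < f b" using sh_decr[OF h, of b "x1 + b"] True x1 by simp
    then have "a * f (x1 + b) < a * f b" using ha by simp
    then have Fx1: "F x1 \<le> 0" unfolding F0 using x1 by simp
    have "1 / a < 1" using a1 by simp
    then have "eventually (\<lambda>x. r x > 1 / a) at_top" using order_tendstoD(1)[OF lim] by blast
    then obtain x2 where x2: "x2 \<ge> x1" "r x2 > 1 / a" using ev_top_ex by blast
    have mx2: "m < x2" using x1 x2 m0 by simp
    have "F x2 > 0" using s2[OF mx2] x2 unfolding G_def by simp
    then have "\<exists>x. x1 \<le> x \<and> x \<le> x2 \<and> F x = 0"
      using Fx1 x2 x1(1) by (intro IVT) (auto intro!: cF simp: m0)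
    then obtain x where "x1 \<le> x" "F x = 0" by blast
    then show ?thesis using x1 m0 by (intro exI[of _ x]) simp
  next
    case False
    then have a1: "a < 1" and bn: "b < 0" and mb: "m = - b" using cond unfolding m_def by auto
    obtain t where t: "t > 0" "f t > f (- b) / a" using sh_big_near0[OF h] by blast
    define x1 where "x1 = t - b"
    have mx1: "m < x1" unfolding x1_def mb using t by simp
    have "f (t - b) < f (- b)" using sh_decr[OF h, of "- b" "t - b"] bn t by simp
    also have "f (- b) < a * f t" using t ha by (simp add: field_simps)
    finally have Fx1: "F x1 \<ge> 0" unfolding F0 x1_def by simp
    have "1 < 1 / a" using a1 ha by simp
    then have "eventually (\<lambda>x. r x < 1 / a) at_top" using order_tendstoD(2)[OF lim] by blast
    then obtain x2 where x2: "x2 \<ge> x1" "r x2 < 1 / a" using ev_top_ex by blast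
    have mx2: "m < x2" using mx1 x2 by simp
    have "F x2 < 0" using s1[OF mx2] x2 unfolding G_def by simp
    then have "\<exists>x. x1 \<le> x \<and> x \<le> x2 \<and> F x = 0"
      using Fx1 x2 mx1 by (intro IVT2) (auto intro!: cF)
    then obtain x where "x1 \<le> x" "F x = 0" by blast
    then show ?thesis using mx1 by (intro exI[of _ x]) simp
  qed
  then obtain x0 where x0: "m < x0" "F x0 = 0" by blast
  have ax0: "a * f (x0 + b) = f x0" using x0(2) unfolding F0 by simp
  have dx0: "deriv F x0 = a * deriv f (x0 + b) - deriv f x0" using dF[OF x0(1)] by (rule DERIV_imp_deriv)
  have "deriv F x0 * f (x0 + b) = deriv f (x0 + b) * f x0 - deriv f x0 * f (x0 + b)"
    unfolding dx0 ax0[symmetric] by (simp add: algebra_simps)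
  moreover have "deriv f (x0 + b) * f x0 - deriv f x0 * f (x0 + b) \<noteq> 0"
  proof (cases "b > 0")
    case True then show ?thesis using keyK[OF h mx(1)[OF x0(1)], of "x0 + b"] by simp
  next
    case False then have "b < 0" using hb by simp
    then show ?thesis using keyK[OF h mx(2)[OF x0(1)], of x0] by simp
  qed
  ultimately have "deriv F x0 \<noteq> 0" by auto
  then show "\<exists>x0\<in>fcheck_dom b. F x0 = 0 \<and> changes_sign_at F x0 \<and> deriv F x0 \<noteq> 0"
    using UC x0 unfolding dom greaterThan_iff by blast
qed

lemma assemble:
  fixes D :: "real set" and F :: "real \<Rightarrow> real"
  assumes U: "\<forall>x\<in>D. \<forall>y\<in>D. F x = 0 \<and> F y = 0 \<longrightarrow> x = y"
    and E: "C1 \<Longrightarrow> \<exists>x0\<in>D. F x0 = 0 \<and> P x0 \<and> Q x0"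
    and N: "\<not> C1 \<Longrightarrow> \<forall>x\<in>D. F x \<noteq> 0"
    and X1: "C1 \<Longrightarrow> \<not> C2" and X2: "\<not> C1 \<Longrightarrow> C2"
  shows "(\<forall>x\<in>D. \<forall>y\<in>D. F x = 0 \<and> F y = 0 \<longrightarrow> x = y) \<and>
    ((\<exists>x0. {x \<in> D. F x = 0} = {x0} \<and> P x0 \<and> Q x0 \<and> C1) \<noteq> ({x \<in> D. F x = 0} = {} \<and> C2))"
proof (cases C1)
  case True
  obtain x0 where x0: "x0 \<in> D" "F x0 = 0" "P x0" "Q x0" using E[OF True] by blast
  have S: "{x \<in> D. F x = 0} = {x0}"
  proof (intro equalityI subsetI)
    fix x assume "x \<in> {x \<in> D. F x = 0}"
    then have "x \<in> D" "F x = 0" by auto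
    then have "x = x0" using U x0 by blast
    then show "x \<in> {x0}" by simp
  qed (use x0 in simp)
  show ?thesis using U S x0 True X1[OF True] by blast
next
  case False
  have S: "{x \<in> D. F x = 0} = {}" using N[OF False] by blast
  show ?thesis using U S False X2[OF False] by blast
qed

theorem lemma3p4:
  fixes f :: "real \<Rightarrow> real" and a b c :: real
  assumes hf: "strongly_hyperbolic f"
    and ha: "a > 0"
    and ha1: "a \<noteq> 1"
    and hbc: "(b \<noteq> 0 \<and> c = 0) \<or> (b = 0 \<and> c \<noteq> 0)"
  shows "(\<forall>x\<in>fcheck_dom b. \<forall>y\<in>fcheck_dom b.
            fcheck f a b c x = 0 \<and> fcheck f a b c y = 0 \<longrightarrow> x = y)
    \<and> ((\<exists>x0. {x \<in> fcheck_dom b. fcheck f a b c x = 0} = {x0}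
              \<and> changes_sign_at (fcheck f a b c) x0
              \<and> deriv (fcheck f a b c) x0 \<noteq> 0
              \<and> ((a > 1 \<and> b > 0 \<and> c = 0) \<or> (a > 1 \<and> b = 0 \<and> c < 0) \<or>
                 (a < 1 \<and> b < 0 \<and> c = 0) \<or> (a < 1 \<and> b = 0 \<and> c > 0)))
       \<noteq>
       ({x \<in> fcheck_dom b. fcheck f a b c x = 0} = {}
              \<and> ((a < 1 \<and> b > 0 \<and> c = 0) \<or> (a < 1 \<and> b = 0 \<and> c < 0) \<or>
                 (a > 1 \<and> b < 0 \<and> c = 0) \<or> (a > 1 \<and> b = 0 \<and> c > 0))))"
proof (cases "b = 0")
  case True
  then have c0: "c \<noteq> 0" using hbc by simp
  show ?thesis unfolding True
    apply (rule assemble)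
    subgoal by (rule case_b0(1)[OF hf ha ha1])
    subgoal premises p
    proof -
      have "(a > 1 \<and> c < 0) \<or> (a < 1 \<and> c > 0)" using p by auto
      then show ?thesis by (rule case_b0(2)[OF hf ha ha1])
    qed
    subgoal premises p
    proof -
      have "\<not> ((a > 1 \<and> c < 0) \<or> (a < 1 \<and> c > 0))" using p by auto
      then show ?thesis by (rule case_b0(3)[OF hf ha ha1])
    qed
    subgoal by auto
    subgoal using c0 ha1 by auto
    done
next
  case False
  then have c0: "c = 0" using hbc by simp
  show ?thesis unfolding c0
    apply (rule assemble)
    subgoal by (rule case_c0(1)[OF hf ha ha1 False])
    subgoal premises p
    proof -
      have "(a > 1 \<and> b > 0) \<or> (a < 1 \<and> b < 0)" using p by auto
      then show ?thesis by (rule case_c0(2)[OF hf ha ha1 False])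
    qed
    subgoal premises p
    proof -
      have "\<not> ((a > 1 \<and> b > 0) \<or> (a < 1 \<and> b < 0))" using p by auto
      then show ?thesis by (rule case_c0(3)[OF hf ha ha1 False])
    qed
    subgoal by auto
    subgoal using False ha1 by auto
    done
qed

end
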